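(* A semiring $R$ is $k$-simple if and only if it is $k$-congruence-simple.
   Context: A semiring $(R,+,\cdot)$ is a set with two binary operations such that $(R,+)$ is a commutative semigroup, $(R,\cdot)$ is a semigroup, and multiplication distributes over addition from both sides; no additive neutral element or identity is assumed. An element $0\in R$ is a zero of $R$ if $0+r=r$ and $0r=r0=0$ for all $r\in R$. An ideal of $R$ is a nonempty subset $A\subseteq R$ with $a+b\in A$ and $ra,ar\in A$ for all $a,b\in A$, $r\in R$; the trivial ideals are $R$ and, if $R$ has a zero $0$, $\{0\}$. For an ideal $A$, its $k$-closure is $\overline{A}=\{x\in R\mid x+a=b \text{ for some } a,b\in A\}$, and $A$ is a $k$-ideal if $A=\overline{A}$. $R$ is $k$-simple if it has no $k$-ideals other than the trivial ideals. A congruence on $R$ is an equivalence relation $\equiv$ such that $a\equiv b$ implies $a+c\equiv b+c$, $ac\equiv bc$, $ca\equiv cb$ for all $a,b,c\in R$. For an ideal $A$, $\kappa_A$ is the congruence defined by $x\,\kappa_A\,y$ iff $x+a=y+b$ for some $a,b\in A$. A congruence $\theta$ is a $k$-congruence if $\theta=\kappa_A$ for some ideal $A$ of $R$. $R$ is $k$-congruence-simple if it has no $k$-congruences other than $R\times R$ and the identity relation $\mathrm{id}_R$. Throughout, $|R|\geq 2$. *)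

theory Defs
  imports Main
begin

text \<open>A semiring in the sense of the paper (no additive neutral element, no identity)
is exactly the Isabelle type class semiring: ab_semigroup_add + semigroup_mult
with two-sided distributivity. The semiring R is the whole type.\<close>

definition is_zero :: "'a::semiring \<Rightarrow> bool" where
  "is_zero z \<longleftrightarrow> (\<forall>r. z + r = r \<and> z * r = z \<and> r * z = z)"

definition is_ideal :: "'a::semiring set \<Rightarrow> bool" where
  "is_ideal A \<longleftrightarrow> A \<noteq> {} \<and> (\<forall>a\<in>A. \<forall>b\<in>A. a + b \<in> A)
     \<and> (\<forall>a\<in>A. \<forall>r. r * a \<in> A \<and> a * r \<in> A)"

definition trivial_ideal :: "'a::semiring set \<Rightarrow> bool" where
  "trivial_ideal A \<longleftrightarrow> A = UNIV \<or> (\<exists>z. is_zero z \<and> A = {z})"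

definition k_closure :: "'a::semiring set \<Rightarrow> 'a set" where
  "k_closure A = {x. \<exists>a\<in>A. \<exists>b\<in>A. x + a = b}"

definition is_k_ideal :: "'a::semiring set \<Rightarrow> bool" where
  "is_k_ideal A \<longleftrightarrow> is_ideal A \<and> A = k_closure A"

definition k_simple :: "'a::semiring itself \<Rightarrow> bool" where
  "k_simple _ \<longleftrightarrow> (\<forall>A::'a set. is_k_ideal A \<longrightarrow> trivial_ideal A)"

definition is_congruence :: "('a::semiring \<times> 'a) set \<Rightarrow> bool" where
  "is_congruence \<theta> \<longleftrightarrow> equiv UNIV \<theta> \<and>
     (\<forall>a b c. (a, b) \<in> \<theta> \<longrightarrow> (a + c, b + c) \<in> \<theta> \<and> (a * c, b * c) \<in> \<theta> \<and> (c * a, c * b) \<in> \<theta>)"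

definition kappa :: "'a::semiring set \<Rightarrow> ('a \<times> 'a) set" where
  "kappa A = {(x, y). \<exists>a\<in>A. \<exists>b\<in>A. x + a = y + b}"

definition is_k_congruence :: "('a::semiring \<times> 'a) set \<Rightarrow> bool" where
  "is_k_congruence \<theta> \<longleftrightarrow> is_congruence \<theta> \<and> (\<exists>A. is_ideal A \<and> \<theta> = kappa A)"

definition k_congruence_simple :: "'a::semiring itself \<Rightarrow> bool" where
  "k_congruence_simple _ \<longleftrightarrow>
     (\<forall>\<theta>::('a \<times> 'a) set. is_k_congruence \<theta> \<longrightarrow> \<theta> = UNIV \<or> \<theta> = Id)"

end

theory Submission
  imports Defs
begin

lemma ideal_nonempty: "is_ideal A \<Longrightarrow> \<exists>a. a \<in> A"
  unfolding is_ideal_def by blast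

lemma kappa_cong:
  fixes A :: "'a::semiring set"
  assumes "is_ideal A" shows "is_congruence (kappa A)"
proof -
  have add: "\<And>a b. a\<in>A \<Longrightarrow> b\<in>A \<Longrightarrow> a+b\<in>A" and
       mul: "\<And>a r. a\<in>A \<Longrightarrow> r*a\<in>A \<and> a*r\<in>A"
    using assms unfolding is_ideal_def by blast+
  obtain a0 where a0: "a0 \<in> A" using ideal_nonempty[OF assms] by blast
  have refl: "refl (kappa A)"
  proof (rule refl_onI)
    fix x :: 'a
    have "x + a0 = x + a0" by simp
    then show "(x,x) \<in> kappa A" unfolding kappa_def using a0 by blast
  qed
  have sym: "sym (kappa A)"
  proof (rule symI)
    fix x y assume "(x,y) \<in> kappa A"
    then obtain a b where "a\<in>A" "b\<in>A" "x+a=y+b" unfolding kappa_def by blast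
    then show "(y,x) \<in> kappa A" unfolding kappa_def by (metis (mono_tags, lifting) case_prodI mem_Collect_eq)
  qed
  have trans: "trans (kappa A)"
  proof (rule transI)
    fix x y z assume "(x,y) \<in> kappa A" "(y,z) \<in> kappa A"
    then obtain a b c d where "a\<in>A" "b\<in>A" "c\<in>A" "d\<in>A" "x+a=y+b" "y+c=z+d"
      unfolding kappa_def by blast
    moreover have "x+(a+c) = z+(d+b)"
    proof -
      have "x+(a+c) = (x+a)+c" by (simp add: add.assoc)
      also have "\<dots> = (y+c)+b" using \<open>x+a=y+b\<close> by (simp add: ac_simps)
      also have "\<dots> = z+(d+b)" using \<open>y+c=z+d\<close> by (simp add: ac_simps)
      finally show ?thesis .
    qed
    ultimately show "(x,z) \<in> kappa A" unfolding kappa_def using add by blast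
  qed
  have comp: "(a + c, b + c) \<in> kappa A \<and> (a * c, b * c) \<in> kappa A \<and> (c * a, c * b) \<in> kappa A"
    if "(a,b) \<in> kappa A" for a b c
  proof -
    from that obtain p q where pq: "p\<in>A" "q\<in>A" "a+p=b+q" unfolding kappa_def by blast
    have "a+c+p = b+c+q"
    proof -
      have "a+c+p = (a+p)+c" by (simp add: ac_simps)
      also have "\<dots> = b+c+q" using pq(3) by (simp add: ac_simps)
      finally show ?thesis .
    qed
    moreover have "a*c + p*c = b*c + q*c" by (metis pq(3) distrib_right)
    moreover have "c*a + c*p = c*b + c*q" by (metis pq(3) distrib_left)
    ultimately show ?thesis unfolding kappa_def using pq mul by blast
  qed
  show ?thesis unfolding is_congruence_def using equivI[OF _ refl sym trans, simplified] comp by blast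
qed

theorem theorem4p4:
  assumes "\<exists>x y :: 'a::semiring. x \<noteq> y"
  shows "k_simple TYPE('a) \<longleftrightarrow> k_congruence_simple TYPE('a)"
proof
  assume ks: "k_simple TYPE('a)"
  show "k_congruence_simple TYPE('a)"
    unfolding k_congruence_simple_def
  proof (intro allI impI)
    fix \<theta> :: "('a \<times> 'a) set" assume "is_k_congruence \<theta>"
    then obtain A where A: "is_ideal A" "\<theta> = kappa A" unfolding is_k_congruence_def by blast
    have add: "\<And>a b. a\<in>A \<Longrightarrow> b\<in>A \<Longrightarrow> a+b\<in>A" and
         mul: "\<And>a r. a\<in>A \<Longrightarrow> r*a\<in>A \<and> a*r\<in>A"
      using A(1) unfolding is_ideal_def by blast+
    define C where "C = k_closure A"
    have sub: "A \<subseteq> C" unfolding C_def k_closure_def using add by blast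
    have Cadd: "x+y \<in> C" if "x\<in>C" "y\<in>C" for x y
    proof -
      from that obtain a b c d where "a\<in>A" "b\<in>A" "c\<in>A" "d\<in>A" "x+a=b" "y+c=d"
        unfolding C_def k_closure_def by blast
      moreover have "x+y+(a+c) = b+d"
      proof -
        have "x+y+(a+c) = (x+a)+(y+c)" by (simp add: ac_simps)
        then show ?thesis using \<open>x+a=b\<close> \<open>y+c=d\<close> by simp
      qed
      ultimately show ?thesis unfolding C_def k_closure_def using add by blast
    qed
    have Cmul: "r*x \<in> C \<and> x*r \<in> C" if "x\<in>C" for x r
    proof -
      from that obtain a b where "a\<in>A" "b\<in>A" "x+a=b"
        unfolding C_def k_closure_def by blast
      moreover have "r*x + r*a = r*b" "x*r+a*r = b*r"
        by (metis \<open>x+a=b\<close> distrib_left distrib_right)+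
      ultimately show ?thesis unfolding C_def k_closure_def using mul by blast
    qed
    have Cid: "is_ideal C" unfolding is_ideal_def using Cadd Cmul sub A(1) ideal_nonempty by blast
    have Ccl: "k_closure C \<subseteq> C"
    proof
      fix x assume "x \<in> k_closure C"
      then obtain a b where ab: "a\<in>C" "b\<in>C" "x+a=b" unfolding k_closure_def by blast
      then obtain a1 a2 b1 b2 where "a1\<in>A" "a2\<in>A" "b1\<in>A" "b2\<in>A" "a+a1=a2" "b+b1=b2"
        unfolding C_def k_closure_def by blast
      moreover have "x + (a2+b1) = b2+a1"
      proof -
        have "x + (a2+b1) = (x+a)+a1+b1" unfolding \<open>a+a1=a2\<close>[symmetric] by (simp add: ac_simps)
        also have "\<dots> = (b+b1)+a1" using ab(3) by (simp add: ac_simps)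
        finally show ?thesis using \<open>b+b1=b2\<close> by simp
      qed
      ultimately show "x \<in> C" unfolding C_def k_closure_def using add by blast
    qed
    have "k_closure C \<supseteq> C" unfolding k_closure_def using Cadd by blast
    with Ccl Cid have "is_k_ideal C" unfolding is_k_ideal_def by blast
    with ks have "trivial_ideal C" unfolding k_simple_def by blast
    then consider "C = UNIV" | z where "is_zero z" "C = {z}" unfolding trivial_ideal_def by blast
    then show "\<theta> = UNIV \<or> \<theta> = Id"
    proof cases
      case 1
      have "(x,y) \<in> kappa A" for x y
      proof -
        have "x \<in> C" "y \<in> C" using 1 by auto
        then obtain a b c d where "a\<in>A" "b\<in>A" "c\<in>A" "d\<in>A" "x+a=b" "y+c=d"
          unfolding C_def k_closure_def by blast
        moreover have "x+(a+d) = y+(c+b)"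
        proof -
          have "x+(a+d) = (x+a)+d" by (simp add: ac_simps)
          also have "\<dots> = (y+c)+b" using \<open>x+a=b\<close> \<open>y+c=d\<close> by (simp add: ac_simps)
          finally show ?thesis by (simp add: ac_simps)
        qed
        ultimately show ?thesis unfolding kappa_def using add by blast
      qed
      then show ?thesis using A(2) by auto
    next
      case (2 z)
      have "A = {z}" using sub 2 A(1) ideal_nonempty by blast
      have "(x,y) \<in> kappa A \<longleftrightarrow> x = y" for x y
      proof
        assume "(x,y) \<in> kappa A"
        then have "x + z = y + z" using \<open>A={z}\<close> unfolding kappa_def by blast
        then show "x = y" using 2(1) unfolding is_zero_def by (metis add.commute)
      next
        assume "x = y" then show "(x,y) \<in> kappa A" using \<open>A={z}\<close> unfolding kappa_def by blast
      qed
      then show ?thesis using A(2) by auto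
    qed
  qed
next
  assume kc: "k_congruence_simple TYPE('a)"
  show "k_simple TYPE('a)" unfolding k_simple_def
  proof (intro allI impI)
    fix A :: "'a set" assume kA: "is_k_ideal A"
    then have A: "is_ideal A" "A = k_closure A" unfolding is_k_ideal_def by blast+
    have add: "\<And>a b. a\<in>A \<Longrightarrow> b\<in>A \<Longrightarrow> a+b\<in>A" and
         mul: "\<And>a r. a\<in>A \<Longrightarrow> r*a\<in>A \<and> a*r\<in>A"
      using A(1) unfolding is_ideal_def by blast+
    obtain a0 where a0: "a0 \<in> A" using ideal_nonempty[OF A(1)] by blast
    have "is_k_congruence (kappa A)" unfolding is_k_congruence_def using kappa_cong[OF A(1)] A(1) by blast
    with kc have "kappa A = UNIV \<or> kappa A = Id" unfolding k_congruence_simple_def by blast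
    then show "trivial_ideal A"
    proof
      assume U: "kappa A = UNIV"
      have "x \<in> A" for x
      proof -
        have "(x,a0) \<in> kappa A" using U by auto
        then obtain a b where "a\<in>A" "b\<in>A" "x+a=a0+b" unfolding kappa_def by blast
        then have "x \<in> k_closure A" unfolding k_closure_def using add a0 by blast
        then show ?thesis using A(2) by blast
      qed
      then show ?thesis unfolding trivial_ideal_def by blast
    next
      assume I: "kappa A = Id"
      have single: "a = b" if "a\<in>A" "b\<in>A" for a b
      proof -
        have "a + b = b + a" by (rule add.commute)
        then have "(a,b) \<in> kappa A" unfolding kappa_def using that by blast
        then show ?thesis using I by auto
      qed
      have "A = {a0}" using single a0 by blast
      have "is_zero a0" unfolding is_zero_def
      proof
        fix r
        have e: "r + (a0+a0) = (r+a0) + a0" by (simp add: add.assoc)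
        have "a0+a0 \<in> A" using a0 add by blast
        then have "(r, r+a0) \<in> kappa A" unfolding kappa_def using a0 e by blast
        then have "a0 + r = r" using I by (auto simp: add.commute)
        moreover have "a0*r = a0" "r*a0 = a0" using mul[OF a0] \<open>A={a0}\<close> by auto
        ultimately show "a0 + r = r \<and> a0 * r = a0 \<and> r * a0 = a0" by blast
      qed
      then show ?thesis unfolding trivial_ideal_def using \<open>A={a0}\<close> by blast
    qed
  qed
qed

end
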